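(* Let $\Sigma$ be a $(\mathbf d,\mathbf z)$-cluster pattern with principal coefficients and initial seed $(\mathbf x,\mathbf y,B)$. Equip $\mathbb Z[x_1^{\pm1},\dots,x_n^{\pm1},\mathbf y,\mathbf z]$ with the $\mathbb Z^n$-grading $\deg x_i=\mathbf e_i$, $\deg y_j=-\mathbf b_j:=-\sum_{i=1}^nb_{ij}\mathbf e_i$ (minus the $j$-th column of $B$), $\deg z_{i,s}=0$, where $\mathbf e_i$ are the unit vectors. Then every $X$-function $X^t_i(\mathbf x,\mathbf y,\mathbf z)$ of $\Sigma$ is homogeneous with respect to this grading.
   Context: All matrices are integer and $[a]_+=\max(a,0)$. A semifield $\mathbb{P}$ is an abelian multiplicative group with a commutative, associative operation $\oplus$ over which multiplication distributes; $\mathbb{Z}\mathbb{P}$ its group ring, $\mathbb{Q}\mathbb{P}$ the fraction field of $\mathbb Z\mathbb P$, $\mathcal{F}=\mathbb{Q}\mathbb{P}(w_1,\dots,w_n)$. A seed in $\mathbb{P}$ is $(\mathbf{x},\mathbf{y},B)$ with $B=(b_{ij})$ skew-symmetrizable $n\times n$, $\mathbf{x}\in\mathcal{F}^n$, $\mathbf{y}\in\mathbb{P}^n$. Mutation data: positive integers $\mathbf d$ and $z_{i,s}$ ($1\le s\le d_i-1$) with $z_{i,s}=z_{i,d_i-s}$, $z_{i,0}=z_{i,d_i}=1$. The $(\mathbf d,\mathbf z)$-mutation $\mu_k(\mathbf{x},\mathbf{y},B)=(\mathbf{x}',\mathbf{y}',B')$: $b'_{ij}=-b_{ij}$ if $i=k$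 or $j=k$, else $b'_{ij}=b_{ij}+d_k([-b_{ik}]_+b_{kj}+b_{ik}[b_{kj}]_+)$; $y'_k=y_k^{-1}$, $y'_i=y_i(y_k^{[\varepsilon b_{ki}]_+})^{d_k}(\bigoplus_{s=0}^{d_k}z_{k,s}y_k^{\varepsilon s})^{-b_{ki}}$ ($i\ne k$); $x'_i=x_i$ ($i\ne k$), $x'_k=x_k^{-1}(\prod_jx_j^{[-\varepsilon b_{jk}]_+})^{d_k}\frac{\sum_{s=0}^{d_k}z_{k,s}\hat y_k^{\varepsilon s}}{\bigoplus_{s=0}^{d_k}z_{k,s}y_k^{\varepsilon s}}$, $\hat y_i=y_i\prod_jx_j^{b_{ji}}$, $\varepsilon=\pm1$. $\mathbb T_n$ is the $n$-regular tree with edges labeled $1,\dots,n$, distinct labels at each vertex. A $(\mathbf d,\mathbf z)$-cluster pattern in $\mathbb P$ assigns seeds $(\mathbf x_t,\mathbf y_t,B_t)$, $\mathbf x_t=(x^t_i)$, to vertices, related by $\mu_k$ along edges labeled $k$, with initial seed at a fixed vertex $t_0$. Principal coefficients: with $y_1,\dots,y_n$, $z_{i,s}$ ($z_{i,s}=z_{i,d_i-s}$) formal variables, $\mathrm{Trop}(\mathbf y,\mathbf z)$ is the free abelian group they generate with $\oplus$ the componentwise minimum of exponents; the pattern with principal coefficients is the one in $\mathrm{Trop}(\mathbf y,\mathbf z)$ with initial seed $(\mathbf x,\mathbf y,B)$. Each $x^t_i$ equals a Laurent polynomial $X^t_i(\mathbf x,\mathbf y,\mathbf z)$ (the $X$-function),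 which lies in $\mathbb Z[x_1^{\pm1},\dots,x_n^{\pm1},\mathbf y,\mathbf z]$. *)

theory Defs
  imports Complex_Main
begin

text \<open>Indices run over 0..n-1 (instead of 1..n). Elements of the tropical semifield
Trop(y,z) are Laurent monomials, represented by their exponent vectors: a function on
the y-indices and a function on the (canonical) z-indices. The variable z_{i,s}
(1 <= s <= d_i - 1) is identified with z_{i,d_i-s}; its canonical index is
(i, min s (d_i - s)).\<close>

type_synonym trop = "(nat \<Rightarrow> int) \<times> (nat \<times> nat \<Rightarrow> int)"

definition tone :: trop where "tone = ((\<lambda>_. 0), (\<lambda>_. 0))"

definition tmul :: "trop \<Rightarrow> trop \<Rightarrow> trop" where
  "tmul a b = ((\<lambda>j. fst a j + fst b j), (\<lambda>q. snd a q + snd b q))"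

definition tpow :: "trop \<Rightarrow> int \<Rightarrow> trop" where
  "tpow a m = ((\<lambda>j. m * fst a j), (\<lambda>q. m * snd a q))"

definition tinv :: "trop \<Rightarrow> trop" where "tinv a = tpow a (-1)"

text \<open>Tropical sum over a finite nonempty index set: componentwise minimum of exponents.\<close>
definition tsum :: "nat set \<Rightarrow> (nat \<Rightarrow> trop) \<Rightarrow> trop" where
  "tsum S f = ((\<lambda>j. Min ((\<lambda>s. fst (f s) j) ` S)), (\<lambda>q. Min ((\<lambda>s. snd (f s) q) ` S)))"

definition zidx :: "(nat \<Rightarrow> nat) \<Rightarrow> nat \<Rightarrow> nat \<Rightarrow> nat \<times> nat" where
  "zidx d i s = (i, min s (d i - s))"

definition zset :: "nat \<Rightarrow> (nat \<Rightarrow> nat) \<Rightarrow> (nat \<times> nat) set" where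
  "zset n d = {(i, s). i < n \<and> 1 \<le> s \<and> 2 * s \<le> d i}"

definition tz :: "(nat \<Rightarrow> nat) \<Rightarrow> nat \<Rightarrow> nat \<Rightarrow> trop" where
  "tz d k s = (if s = 0 \<or> d k \<le> s then tone else ((\<lambda>_. 0), (\<lambda>_. 0)(zidx d k s := 1)))"

definition ty :: "nat \<Rightarrow> trop" where "ty j = ((\<lambda>_. 0)(j := 1), (\<lambda>_. 0))"

text \<open>Elements of the ambient field F = QP(x_1..x_n) are represented by the real functions
they induce on points with all x_i, y_j, z_{i,s} positive reals
(a point is a triple of values for x, y and canonical z).\<close>

type_synonym pt = "(nat \<Rightarrow> real) \<times> (nat \<Rightarrow> real) \<times> (nat \<times> nat \<Rightarrow> real)"

definition positive_pt :: "nat \<Rightarrow> (nat \<Rightarrow> nat) \<Rightarrow> pt \<Rightarrow> bool" where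
  "positive_pt n d v \<longleftrightarrow> (\<forall>j<n. fst v j > 0) \<and> (\<forall>j<n. fst (snd v) j > 0)
      \<and> (\<forall>q\<in>zset n d. snd (snd v) q > 0)"

definition teval :: "nat \<Rightarrow> (nat \<Rightarrow> nat) \<Rightarrow> pt \<Rightarrow> trop \<Rightarrow> real" where
  "teval n d v a = (\<Prod>j<n. power_int (fst (snd v) j) (fst a j))
                 * (\<Prod>q\<in>zset n d. power_int (snd (snd v) q) (snd a q))"

definition zval :: "(nat \<Rightarrow> nat) \<Rightarrow> pt \<Rightarrow> nat \<Rightarrow> nat \<Rightarrow> real" where
  "zval d v k s = (if s = 0 \<or> d k \<le> s then 1 else snd (snd v) (zidx d k s))"

definition pos :: "int \<Rightarrow> int" where "pos a = max a 0"

text \<open>(d,z)-mutation in direction k, with the choice epsilon = 1.\<close>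

definition mutB :: "(nat \<Rightarrow> nat) \<Rightarrow> nat \<Rightarrow> (nat \<Rightarrow> nat \<Rightarrow> int) \<Rightarrow> (nat \<Rightarrow> nat \<Rightarrow> int)" where
  "mutB d k B = (\<lambda>i j. if i = k \<or> j = k then - B i j
      else B i j + int (d k) * (pos (- B i k) * B k j + B i k * pos (B k j)))"

definition tden :: "(nat \<Rightarrow> nat) \<Rightarrow> nat \<Rightarrow> (nat \<Rightarrow> trop) \<Rightarrow> trop" where
  "tden d k Y = tsum {0..d k} (\<lambda>s. tmul (tz d k s) (tpow (Y k) (int s)))"

definition mutY :: "(nat \<Rightarrow> nat) \<Rightarrow> nat \<Rightarrow> (nat \<Rightarrow> nat \<Rightarrow> int) \<Rightarrow> (nat \<Rightarrow> trop) \<Rightarrow> (nat \<Rightarrow> trop)" where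
  "mutY d k B Y = (\<lambda>i. if i = k then tinv (Y k)
      else tmul (tmul (Y i) (tpow (Y k) (int (d k) * pos (B k i))))
                (tpow (tden d k Y) (- B k i)))"

definition mutX :: "nat \<Rightarrow> (nat \<Rightarrow> nat) \<Rightarrow> nat \<Rightarrow> (nat \<Rightarrow> nat \<Rightarrow> int) \<Rightarrow> (nat \<Rightarrow> trop)
    \<Rightarrow> (nat \<Rightarrow> pt \<Rightarrow> real) \<Rightarrow> (nat \<Rightarrow> pt \<Rightarrow> real)" where
  "mutX n d k B Y X = (\<lambda>i v. if i \<noteq> k then X i v else
      (let yhat = teval n d v (Y k) * (\<Prod>j<n. power_int (X j v) (B j k)) in
       inverse (X k v) * (\<Prod>j<n. power_int (X j v) (pos (- B j k))) ^ d k
       * (\<Sum>s = 0..d k. zval d v k s * yhat ^ s) / teval n d v (tden d k Y)))"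

type_synonym seed = "(nat \<Rightarrow> nat \<Rightarrow> int) \<times> (nat \<Rightarrow> trop) \<times> (nat \<Rightarrow> pt \<Rightarrow> real)"

definition mut :: "nat \<Rightarrow> (nat \<Rightarrow> nat) \<Rightarrow> seed \<Rightarrow> nat \<Rightarrow> seed" where
  "mut n d S k = (case S of (B, Y, X) \<Rightarrow> (mutB d k B, mutY d k B Y, mutX n d k B Y X))"

text \<open>Vertices of the n-regular tree T_n are reduced words ks (entries < n, no two
consecutive entries equal): the path from t0.\<close>

definition tree_vertex :: "nat \<Rightarrow> nat list \<Rightarrow> bool" where
  "tree_vertex n ks \<longleftrightarrow> set ks \<subseteq> {..<n} \<and> (\<forall>i. Suc i < length ks \<longrightarrow> ks ! i \<noteq> ks ! Suc i)"

definition seed_at :: "nat \<Rightarrow> (nat \<Rightarrow> nat) \<Rightarrow> (nat \<Rightarrow> nat \<Rightarrow> int) \<Rightarrow> nat list \<Rightarrow> seed" where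
  "seed_at n d B0 ks = foldl (mut n d) (B0, ty, (\<lambda>i v. fst v i)) ks"

definition cluster_var :: "nat \<Rightarrow> (nat \<Rightarrow> nat) \<Rightarrow> (nat \<Rightarrow> nat \<Rightarrow> int) \<Rightarrow> nat list \<Rightarrow> nat \<Rightarrow> pt \<Rightarrow> real" where
  "cluster_var n d B0 ks i = snd (snd (seed_at n d B0 ks)) i"

definition skew_symmetrizable :: "nat \<Rightarrow> (nat \<Rightarrow> nat \<Rightarrow> int) \<Rightarrow> bool" where
  "skew_symmetrizable n B \<longleftrightarrow> (\<exists>D :: nat \<Rightarrow> int. (\<forall>i<n. D i > 0)
      \<and> (\<forall>i<n. \<forall>j<n. D i * B i j = - (D j * B j i)))"

text \<open>A monomial: integer exponents of x_j, natural exponents of y_j and of the canonical z's.\<close>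
type_synonym mon = "(nat \<Rightarrow> int) \<times> (nat \<Rightarrow> nat) \<times> (nat \<times> nat \<Rightarrow> nat)"

definition admissible_mon :: "nat \<Rightarrow> (nat \<Rightarrow> nat) \<Rightarrow> mon \<Rightarrow> bool" where
  "admissible_mon n d m \<longleftrightarrow> (\<forall>j. n \<le> j \<longrightarrow> fst m j = 0 \<and> fst (snd m) j = 0)
      \<and> (\<forall>q. q \<notin> zset n d \<longrightarrow> snd (snd m) q = 0)"

definition laurent_poly :: "nat \<Rightarrow> (nat \<Rightarrow> nat) \<Rightarrow> (mon \<Rightarrow> int) \<Rightarrow> bool" where
  "laurent_poly n d P \<longleftrightarrow> finite {m. P m \<noteq> 0} \<and> (\<forall>m. P m \<noteq> 0 \<longrightarrow> admissible_mon n d m)"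

definition mon_eval :: "nat \<Rightarrow> (nat \<Rightarrow> nat) \<Rightarrow> mon \<Rightarrow> pt \<Rightarrow> real" where
  "mon_eval n d m v = (\<Prod>j<n. power_int (fst v j) (fst m j))
      * (\<Prod>j<n. fst (snd v) j ^ fst (snd m) j)
      * (\<Prod>q\<in>zset n d. snd (snd v) q ^ snd (snd m) q)"

definition lp_eval :: "nat \<Rightarrow> (nat \<Rightarrow> nat) \<Rightarrow> (mon \<Rightarrow> int) \<Rightarrow> pt \<Rightarrow> real" where
  "lp_eval n d P v = (\<Sum>m\<in>{m. P m \<noteq> 0}. of_int (P m) * mon_eval n d m v)"

definition mon_deg :: "nat \<Rightarrow> (nat \<Rightarrow> nat \<Rightarrow> int) \<Rightarrow> mon \<Rightarrow> nat \<Rightarrow> int" where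
  "mon_deg n B m i = fst m i - (\<Sum>j<n. B i j * int (fst (snd m) j))"

definition homogeneous :: "nat \<Rightarrow> (nat \<Rightarrow> nat \<Rightarrow> int) \<Rightarrow> (mon \<Rightarrow> int) \<Rightarrow> bool" where
  "homogeneous n B P \<longleftrightarrow> (\<exists>g :: nat \<Rightarrow> int. \<forall>m. P m \<noteq> 0 \<longrightarrow> (\<forall>i<n. mon_deg n B m i = g i))"

end

theory Submission
  imports Defs "HOL-Computational_Algebra.Polynomial"
begin

lemma onevar:
  fixes b :: "'a \<Rightarrow> real" and f :: "'a \<Rightarrow> int"
  assumes fin: "finite A" and H: "\<forall>r::real. (\<Sum>a\<in>A. b a * exp (of_int (f a) * r)) = 0"
  shows "(\<Sum>a\<in>{a\<in>A. f a = k}. b a) = 0"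
proof (cases "{a\<in>A. f a = k} = {}")
  case True then show ?thesis by (simp only: sum.empty)
next
  case False
  define N where "N = (\<Sum>a\<in>A. nat \<bar>f a\<bar>)"
  have Nge: "f a + int N \<ge> 0" if "a \<in> A" for a
  proof -
    have "nat \<bar>f a\<bar> \<le> N" unfolding N_def by (rule member_le_sum[OF that]) (use fin in auto)
    then show ?thesis by linarith
  qed
  define p where "p = (\<Sum>a\<in>A. monom (b a) (nat (f a + int N)))"
  have "poly p (exp r) = 0" for r
  proof -
    have "poly p (exp r) = (\<Sum>a\<in>A. b a * exp r ^ nat (f a + int N))"
      unfolding p_def by (simp add: poly_sum poly_monom)
    also have "\<dots> = (\<Sum>a\<in>A. exp (of_int N * r) * (b a * exp (of_int (f a) * r)))"
    proof (rule sum.cong)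
      fix a assume a: "a \<in> A"
      have "exp r ^ nat (f a + int N) = exp (of_nat (nat (f a + int N)) * r)"
        by (simp add: exp_of_nat_mult)
      also have "\<dots> = exp (of_int N * r + of_int (f a) * r)"
        using Nge[OF a] by (simp add: algebra_simps)
      finally show "b a * exp r ^ nat (f a + int N) = exp (of_int N * r) * (b a * exp (of_int (f a) * r))"
        by (simp add: exp_add)
    qed simp
    also have "\<dots> = 0" using H by (simp add: sum_distrib_left[symmetric])
    finally show ?thesis .
  qed
  have p0: "p = 0"
  proof (rule ccontr)
    assume "p \<noteq> 0"
    then have "finite {x. poly p x = 0}" by (rule poly_roots_finite)
    moreover have "range exp \<subseteq> {x. poly p x = 0}" using \<open>\<And>r. poly p (exp r) = 0\<close> by auto
    ultimately have "finite (range (exp :: real \<Rightarrow> real))" by (rule finite_subset[rotated])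
    moreover have "inj (exp :: real \<Rightarrow> real)" by (simp add: inj_on_def)
    ultimately have "finite (UNIV :: real set)" using finite_imageD by blast
    then show False using infinite_UNIV_char_0 by blast
  qed
  from False obtain a0 where a0: "a0 \<in> A" "f a0 = k" by auto
  have kN: "k + int N \<ge> 0" using Nge[OF a0(1)] a0(2) by simp
  have "coeff p (nat (k + int N)) = (\<Sum>a\<in>A. if nat (f a + int N) = nat (k + int N) then b a else 0)"
    unfolding p_def by (simp add: coeff_sum coeff_monom)
  also have "\<dots> = (\<Sum>a\<in>A. if f a = k then b a else 0)"
    by (rule sum.cong) (use Nge kN in \<open>auto simp: eq_nat_nat_iff\<close>)
  also have "\<dots> = (\<Sum>a\<in>{a\<in>A. f a = k}. b a)"
    using fin by (simp add: sum.inter_filter)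
  finally show ?thesis using p0 by simp
qed

lemma multivar:
  fixes c :: "'a \<Rightarrow> real" and E :: "'a \<Rightarrow> 'v \<Rightarrow> int"
  assumes "finite V" "finite A" "\<forall>a\<in>A. \<forall>x. x \<notin> V \<longrightarrow> E a x = 0"
    "\<forall>s. (\<Sum>a\<in>A. c a * exp (\<Sum>x\<in>V. of_int (E a x) * s x)) = 0"
  shows "(\<Sum>a\<in>{a\<in>A. E a = e}. c a) = 0"
  using assms
proof (induction V arbitrary: A E c e rule: finite_induct)
  case empty
  have EA: "\<forall>a\<in>A. E a = (\<lambda>_. 0)" using empty.prems(2) by auto
  have tot: "(\<Sum>a\<in>A. c a) = 0" using empty.prems(3) by simp
  show ?case
  proof (cases "e = (\<lambda>_. 0)")
    case True
    then have "{a\<in>A. E a = e} = A" using EA by auto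
    then show ?thesis using tot by simp
  next
    case False
    then have "{a\<in>A. E a = e} = {}" using EA by auto
    then show ?thesis by (simp only: sum.empty)
  qed
next
  case (insert w V)
  define A' where "A' = {a\<in>A. E a w = e w}"
  define E' where "E' = (\<lambda>a. (E a)(w := 0))"
  have fA': "finite A'" using insert.prems(1) unfolding A'_def by simp
  have sup': "\<forall>a\<in>A'. \<forall>x. x \<notin> V \<longrightarrow> E' a x = 0"
    using insert.prems(2) unfolding A'_def E'_def by auto
  have V': "\<forall>s. (\<Sum>a\<in>A'. c a * exp (\<Sum>x\<in>V. of_int (E' a x) * s x)) = 0"
  proof
    fix s :: "'v \<Rightarrow> real"
    have eqE: "(\<Sum>x\<in>V. of_int (E' a x) * s x) = (\<Sum>x\<in>V. of_int (E a x) * s x)" for a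
      by (rule sum.cong) (use insert.hyps(2) in \<open>auto simp: E'_def\<close>)
    have "\<forall>r::real. (\<Sum>a\<in>A. (c a * exp (\<Sum>x\<in>V. of_int (E a x) * s x)) * exp (of_int (E a w) * r)) = 0"
    proof
      fix r :: real
      have "(\<Sum>a\<in>A. c a * exp (\<Sum>x\<in>insert w V. of_int (E a x) * (s(w:=r)) x)) = 0"
        using insert.prems(3) by blast
      moreover have "(\<Sum>x\<in>insert w V. of_int (E a x) * (s(w:=r)) x)
          = of_int (E a w) * r + (\<Sum>x\<in>V. of_int (E a x) * s x)" for a
      proof -
        have "(\<Sum>x\<in>V. of_int (E a x) * (s(w:=r)) x) = (\<Sum>x\<in>V. of_int (E a x) * s x)"
          by (rule sum.cong) (use insert.hyps(2) in auto)
        then show ?thesis using insert.hyps by simp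
      qed
      ultimately show "(\<Sum>a\<in>A. (c a * exp (\<Sum>x\<in>V. of_int (E a x) * s x)) * exp (of_int (E a w) * r)) = 0"
        by (simp add: exp_add algebra_simps)
    qed
    from onevar[OF insert.prems(1) this, of "e w"]
    show "(\<Sum>a\<in>A'. c a * exp (\<Sum>x\<in>V. of_int (E' a x) * s x)) = 0"
      unfolding A'_def eqE by simp
  qed
  have IH: "(\<Sum>a\<in>{a\<in>A'. E' a = e(w:=0)}. c a) = 0"
    by (rule insert.IH[OF fA' sup' V'])
  have "{a\<in>A. E a = e} = {a\<in>A'. E' a = e(w:=0)}"
  proof -
    have "E a = e \<longleftrightarrow> E a w = e w \<and> (E a)(w:=0) = e(w:=0)" for a
      by (auto simp: fun_eq_iff)
    then show ?thesis unfolding A'_def E'_def by auto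
  qed
  then show ?case using IH by simp
qed



definition lmono :: "nat \<Rightarrow> (nat \<Rightarrow> real) \<Rightarrow> (nat \<Rightarrow> int) \<Rightarrow> real" where
  "lmono n l g = exp (\<Sum>i<n. of_int (g i) * ln (l i))"

definition posl :: "nat \<Rightarrow> (nat \<Rightarrow> real) \<Rightarrow> bool" where
  "posl n l \<longleftrightarrow> (\<forall>i<n. l i > 0)"

definition act :: "nat \<Rightarrow> (nat \<Rightarrow> nat \<Rightarrow> int) \<Rightarrow> (nat \<Rightarrow> real) \<Rightarrow> pt \<Rightarrow> pt" where
  "act n B l v = ((\<lambda>j. l j * fst v j), (\<lambda>j. fst (snd v) j * lmono n l (\<lambda>i. - B i j)), snd (snd v))"

definition homd :: "nat \<Rightarrow> (nat \<Rightarrow> nat) \<Rightarrow> (nat \<Rightarrow> nat \<Rightarrow> int) \<Rightarrow> (pt \<Rightarrow> real) \<Rightarrow> (nat \<Rightarrow> int) \<Rightarrow> bool" where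
  "homd n d B f g \<longleftrightarrow> (\<forall>l v. posl n l \<longrightarrow> positive_pt n d v \<longrightarrow> f (act n B l v) = lmono n l g * f v)"

lemma mono_pos: "lmono n l g > 0" by (simp add: lmono_def)

lemma mono_add: "lmono n l (\<lambda>i. g i + h i) = lmono n l g * lmono n l h"
  by (simp add: lmono_def sum.distrib distrib_right exp_add)

lemma mono_zero: "lmono n l (\<lambda>_. 0) = 1" by (simp add: lmono_def)

lemma mono_cong: "(\<forall>i<n. g i = h i) \<Longrightarrow> lmono n l g = lmono n l h"
  unfolding lmono_def by (intro arg_cong[where f=exp] sum.cong) auto

lemma mono_uminus: "lmono n l (\<lambda>i. - g i) = inverse (lmono n l g)"
  by (simp add: lmono_def sum_negf exp_minus)

lemma mono_scale: "lmono n l (\<lambda>i. m * g i) = power_int (lmono n l g) m"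
  by (simp add: lmono_def exp_power_int sum_distrib_left mult.assoc)

lemma mono_sum: assumes "finite J" shows "lmono n l (\<lambda>i. \<Sum>j\<in>J. G j i) = (\<Prod>j\<in>J. lmono n l (G j))"
proof -
  have "(\<Sum>i<n. of_int (\<Sum>j\<in>J. G j i) * ln (l i)) = (\<Sum>i<n. \<Sum>j\<in>J. of_int (G j i) * ln (l i))"
    by (simp add: sum_distrib_right)
  also have "\<dots> = (\<Sum>j\<in>J. \<Sum>i<n. of_int (G j i) * ln (l i))" by (rule sum.swap)
  finally show ?thesis unfolding lmono_def using assms by (simp add: exp_sum)
qed

lemma positive_act: "posl n l \<Longrightarrow> positive_pt n d v \<Longrightarrow> positive_pt n d (act n B l v)"
  by (simp add: positive_pt_def act_def posl_def mono_pos)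

lemma homd_mult: "homd n d B f g \<Longrightarrow> homd n d B h g' \<Longrightarrow> homd n d B (\<lambda>v. f v * h v) (\<lambda>i. g i + g' i)"
  by (simp add: homd_def mono_add)

lemma homd_pint: "homd n d B f g \<Longrightarrow> homd n d B (\<lambda>v. power_int (f v) m) (\<lambda>i. m * g i)"
  by (simp add: homd_def mono_scale power_int_mult_distrib)

lemma homd_power: "homd n d B f g \<Longrightarrow> homd n d B (\<lambda>v. (f v) ^ k) (\<lambda>i. int k * g i)"
  using homd_pint[of n d B f g "int k"] by simp

lemma homd_inverse: "homd n d B f g \<Longrightarrow> homd n d B (\<lambda>v. inverse (f v)) (\<lambda>i. - g i)"
  by (simp add: homd_def mono_uminus)

lemma homd_divide: "homd n d B f g \<Longrightarrow> homd n d B h g' \<Longrightarrow> homd n d B (\<lambda>v. f v / h v) (\<lambda>i. g i + - g' i)"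
  using homd_mult[OF _ homd_inverse] by (simp add: divide_inverse)

lemma homd_const: "homd n d B (\<lambda>v. c) (\<lambda>_. 0)"
  by (simp add: homd_def mono_zero)

lemma homd_prod:
  assumes "finite J" "\<forall>j\<in>J. homd n d B (F j) (G j)"
  shows "homd n d B (\<lambda>v. \<Prod>j\<in>J. F j v) (\<lambda>i. \<Sum>j\<in>J. G j i)"
  using assms
proof (induction J rule: finite_induct)
  case empty then show ?case using homd_const[of n d B 1] by simp
next
  case (insert x J)
  have "homd n d B (\<lambda>v. F x v * (\<Prod>j\<in>J. F j v)) (\<lambda>i. G x i + (\<Sum>j\<in>J. G j i))"
    by (rule homd_mult) (use insert in auto)
  then show ?case using insert.hyps by simp
qed

lemma homd_cong: "homd n d B f g \<Longrightarrow> (\<forall>i<n. g i = h i) \<Longrightarrow> homd n d B f h"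
  unfolding homd_def using mono_cong[of n g h] by simp

lemma homd_fcong: "homd n d B f g \<Longrightarrow> (\<forall>v. positive_pt n d v \<longrightarrow> f v = f' v) \<Longrightarrow> homd n d B f' g"
  unfolding homd_def using positive_act by metis

lemma homd_inv0: "(\<forall>l v. posl n l \<longrightarrow> positive_pt n d v \<longrightarrow> f (act n B l v) = f v) \<Longrightarrow> homd n d B f (\<lambda>_. 0)"
  unfolding homd_def mono_zero mult_1 by assumption

lemma homd_inv0D: "homd n d B f (\<lambda>_. 0) \<Longrightarrow> posl n l \<Longrightarrow> positive_pt n d v \<Longrightarrow> f (act n B l v) = f v"
  unfolding homd_def mono_zero mult_1 by blast

lemma homd_y: "homd n d B (\<lambda>v. fst (snd v) j) (\<lambda>i. - B i j)"
  by (simp add: homd_def act_def)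

lemma homd_z: "homd n d B (\<lambda>v. snd (snd v) q) (\<lambda>_. 0)"
  by (simp add: homd_def act_def mono_zero)

lemma homd_x: "j < n \<Longrightarrow> homd n d B (\<lambda>v. fst v j) (\<lambda>i. if i = j then 1 else 0)"
proof -
  assume j: "j < n"
  have "lmono n l (\<lambda>i. if i = j then 1 else 0) = l j" if "posl n l" for l
  proof -
    have "(\<Sum>i<n. of_int (if i = j then 1 else 0) * ln (l i)) = (\<Sum>i<n. if i = j then ln (l i) else 0)"
      by (rule sum.cong) auto
    also have "\<dots> = ln (l j)" using j by (simp add: sum.delta)
    finally have "(\<Sum>i<n. of_int (if i = j then 1 else 0) * ln (l i)) = ln (l j)" .
    then show ?thesis using that j by (simp add: lmono_def posl_def)
  qed
  then show ?thesis by (simp add: homd_def act_def)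
qed

lemma zset_finite: "finite (zset n d)"
proof -
  have "zset n d \<subseteq> {..<n} \<times> {..(\<Sum>i<n. d i)}"
  proof
    fix x assume "x \<in> zset n d"
    then obtain i s where x: "x = (i, s)" "i < n" "2 * s \<le> d i" by (auto simp: zset_def)
    have "d i \<le> (\<Sum>i<n. d i)" by (rule member_le_sum) (use x in auto)
    then show "x \<in> {..<n} \<times> {..(\<Sum>i<n. d i)}" using x by auto
  qed
  then show ?thesis by (rule finite_subset) auto
qed

lemma homd_teval: "homd n d B (\<lambda>v. teval n d v a) (\<lambda>i. (\<Sum>j<n. fst a j * (- B i j)) + (\<Sum>q\<in>zset n d. snd a q * 0))"
  unfolding teval_def
  by (intro homd_mult homd_prod ballI homd_pint homd_y homd_z) (auto simp: zset_finite)

lemma teval_pos: "positive_pt n d v \<Longrightarrow> teval n d v a > 0"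
  unfolding teval_def positive_pt_def by (intro mult_pos_pos prod_pos) auto

definition Lt :: "nat \<Rightarrow> (nat \<Rightarrow> nat) \<Rightarrow> pt \<Rightarrow> trop \<Rightarrow> real" where
  "Lt n d v a = (\<Sum>j<n. of_int (fst a j) * ln (fst (snd v) j)) + (\<Sum>q\<in>zset n d. of_int (snd a q) * ln (snd (snd v) q))"

lemma ln_pint: "(x::real) > 0 \<Longrightarrow> ln (power_int x m) = of_int m * ln x"
proof -
  assume "x > 0"
  then have "exp (ln x) = x" by simp
  then have "power_int x m = power_int (exp (ln x)) m" by simp
  also have "\<dots> = exp (of_int m * ln x)" by (rule exp_power_int)
  finally show ?thesis by simp
qed

lemma ln_teval: assumes pv: "positive_pt n d v" shows "ln (teval n d v a) = Lt n d v a"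
proof -
  have p1: "\<forall>j\<in>{..<n}. fst (snd v) j > 0" and p2: "\<forall>q\<in>zset n d. snd (snd v) q > 0"
    using pv by (auto simp: positive_pt_def)
  have A: "ln (\<Prod>j<n. power_int (fst (snd v) j) (fst a j)) = (\<Sum>j<n. of_int (fst a j) * ln (fst (snd v) j))"
  proof -
    have "ln (\<Prod>j<n. power_int (fst (snd v) j) (fst a j)) = (\<Sum>j<n. ln (power_int (fst (snd v) j) (fst a j)))"
      by (rule ln_prod) (use p1 in force)+
    also have "\<dots> = (\<Sum>j<n. of_int (fst a j) * ln (fst (snd v) j))"
      by (rule sum.cong) (use p1 in \<open>auto simp: ln_pint\<close>)
    finally show ?thesis .
  qed
  have Z: "ln (\<Prod>q\<in>zset n d. power_int (snd (snd v) q) (snd a q)) = (\<Sum>q\<in>zset n d. of_int (snd a q) * ln (snd (snd v) q))"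
  proof -
    have "ln (\<Prod>q\<in>zset n d. power_int (snd (snd v) q) (snd a q)) = (\<Sum>q\<in>zset n d. ln (power_int (snd (snd v) q) (snd a q)))"
      by (rule ln_prod) (use p2 zset_finite in force)+
    also have "\<dots> = (\<Sum>q\<in>zset n d. of_int (snd a q) * ln (snd (snd v) q))"
      by (rule sum.cong) (use p2 in \<open>auto simp: ln_pint\<close>)
    finally show ?thesis .
  qed
  have "ln (teval n d v a) = ln (\<Prod>j<n. power_int (fst (snd v) j) (fst a j)) + ln (\<Prod>q\<in>zset n d. power_int (snd (snd v) q) (snd a q))"
    unfolding teval_def using p1 p2 by (intro ln_mult_pos prod_pos) auto
  then show ?thesis unfolding Lt_def A Z .
qed

lemma Lt_tmul: "Lt n d v (tmul a b) = Lt n d v a + Lt n d v b"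
  by (simp add: Lt_def tmul_def algebra_simps sum.distrib)

lemma Lt_tpow: "Lt n d v (tpow a m) = of_int m * Lt n d v a"
  by (simp add: Lt_def tpow_def algebra_simps sum.distrib sum_distrib_left)

lemma Lt_tinv: "Lt n d v (tinv a) = - Lt n d v a"
  by (simp add: tinv_def Lt_tpow)



definition yh :: "nat \<Rightarrow> (nat \<Rightarrow> nat) \<Rightarrow> (nat \<Rightarrow> nat \<Rightarrow> int) \<Rightarrow> (nat \<Rightarrow> trop) \<Rightarrow> (nat \<Rightarrow> pt \<Rightarrow> real) \<Rightarrow> nat \<Rightarrow> pt \<Rightarrow> real" where
  "yh n d B Y X k v = teval n d v (Y k) * (\<Prod>j<n. power_int (X j v) (B j k))"

definition Sf :: "nat \<Rightarrow> (nat \<Rightarrow> nat) \<Rightarrow> (nat \<Rightarrow> nat \<Rightarrow> int) \<Rightarrow> (nat \<Rightarrow> trop) \<Rightarrow> (nat \<Rightarrow> pt \<Rightarrow> real) \<Rightarrow> nat \<Rightarrow> pt \<Rightarrow> real" where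
  "Sf n d B Y X k v = (\<Sum>s = 0..d k. zval d v k s * yh n d B Y X k v ^ s)"

lemma mutX_other: "i \<noteq> k \<Longrightarrow> mutX n d k B Y X i = X i"
  by (simp add: mutX_def fun_eq_iff)

lemma mutX_k: "mutX n d k B Y X k v = inverse (X k v) * (\<Prod>j<n. power_int (X j v) (pos (- B j k))) ^ d k
      * Sf n d B Y X k v / teval n d v (tden d k Y)"
  by (simp add: mutX_def Sf_def yh_def Let_def)

lemma yh_pos: "positive_pt n d v \<Longrightarrow> (\<forall>j<n. X j v > 0) \<Longrightarrow> yh n d B Y X i v > 0"
  unfolding yh_def by (intro mult_pos_pos teval_pos prod_pos) auto

lemma ln_yh: assumes "positive_pt n d v" "\<forall>j<n. X j v > 0"
  shows "ln (yh n d B Y X i v) = Lt n d v (Y i) + (\<Sum>j<n. of_int (B j i) * ln (X j v))"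
proof -
  have "ln (\<Prod>j<n. power_int (X j v) (B j i)) = (\<Sum>j<n. ln (power_int (X j v) (B j i)))"
    by (rule ln_prod) (use assms(2) in force)+
  also have "\<dots> = (\<Sum>j<n. of_int (B j i) * ln (X j v))"
    by (rule sum.cong) (use assms(2) in \<open>auto simp: ln_pint\<close>)
  finally have P: "ln (\<Prod>j<n. power_int (X j v) (B j i)) = (\<Sum>j<n. of_int (B j i) * ln (X j v))" .
  have "ln (yh n d B Y X i v) = ln (teval n d v (Y i)) + ln (\<Prod>j<n. power_int (X j v) (B j i))"
    unfolding yh_def using assms by (intro ln_mult_pos teval_pos prod_pos) auto
  then show ?thesis using P ln_teval[OF assms(1)] by simp
qed

lemma zval_pos: assumes "k < n" "positive_pt n d v" shows "zval d v k s > 0"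
proof (cases "s = 0 \<or> d k \<le> s")
  case True then show ?thesis by (simp add: zval_def)
next
  case False
  then have "zidx d k s \<in> zset n d" using assms(1) by (auto simp: zidx_def zset_def)
  then show ?thesis using False assms(2) by (simp add: zval_def positive_pt_def)
qed

lemma zval_act: "zval d (act n B0 l v) k s = zval d v k s"
  by (simp add: zval_def act_def)

lemma Sf_pos: assumes "k < n" "positive_pt n d v" "\<forall>j<n. X j v > 0" shows "Sf n d B Y X k v > 0"
  unfolding Sf_def
proof (rule sum_pos2[where i=0])
  show "0 < zval d v k 0 * yh n d B Y X k v ^ 0" using zval_pos[OF assms(1,2)] by simp
  show "\<And>s. s \<in> {0..d k} \<Longrightarrow> 0 \<le> zval d v k s * yh n d B Y X k v ^ s"
    using zval_pos[OF assms(1,2)] yh_pos[where X=X, OF assms(2,3)] by (simp add: less_imp_le)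
qed auto

lemma Xk_pos: assumes "k < n" "positive_pt n d v" "\<forall>j<n. X j v > 0"
  shows "mutX n d k B Y X k v > 0"
  unfolding mutX_k using assms Sf_pos[where X=X, OF assms] teval_pos[OF assms(2)]
  by (intro divide_pos_pos mult_pos_pos prod_pos zero_less_power) auto

lemma ln4: "(a::real) > 0 \<Longrightarrow> b > 0 \<Longrightarrow> c > 0 \<Longrightarrow> e > 0 \<Longrightarrow> ln (a * b * c / e) = ln a + ln b + ln c - ln e"
  by (simp add: ln_div ln_mult_pos)

lemma ln_Xk: assumes "k < n" "positive_pt n d v" "\<forall>j<n. X j v > 0"
  shows "ln (mutX n d k B Y X k v) = - ln (X k v) + of_nat (d k) * (\<Sum>j<n. of_int (pos (- B j k)) * ln (X j v))
     + ln (Sf n d B Y X k v) - Lt n d v (tden d k Y)"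
proof -
  have Xk: "X k v > 0" using assms by auto
  have pp: "(\<Prod>j<n. power_int (X j v) (pos (- B j k))) > 0" using assms(3) by (intro prod_pos) auto
  have "ln (\<Prod>j<n. power_int (X j v) (pos (- B j k))) = (\<Sum>j<n. ln (power_int (X j v) (pos (- B j k))))"
    by (rule ln_prod) (use assms(3) in force)+
  also have "\<dots> = (\<Sum>j<n. of_int (pos (- B j k)) * ln (X j v))"
    by (rule sum.cong) (use assms(3) in \<open>auto simp: ln_pint\<close>)
  finally have P: "ln (\<Prod>j<n. power_int (X j v) (pos (- B j k))) = (\<Sum>j<n. of_int (pos (- B j k)) * ln (X j v))" .
  have S: "Sf n d B Y X k v > 0" by (rule Sf_pos[where X=X, OF assms])
  have T: "teval n d v (tden d k Y) > 0" by (rule teval_pos[OF assms(2)])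
  have "ln (mutX n d k B Y X k v) = ln (inverse (X k v)) + ln ((\<Prod>j<n. power_int (X j v) (pos (- B j k))) ^ d k)
      + ln (Sf n d B Y X k v) - ln (teval n d v (tden d k Y))"
    unfolding mutX_k using Xk pp S T
    by (intro ln4) auto
  also have "\<dots> = - ln (X k v) + of_nat (d k) * ln (\<Prod>j<n. power_int (X j v) (pos (- B j k)))
      + ln (Sf n d B Y X k v) - Lt n d v (tden d k Y)"
    using Xk pp by (simp add: ln_inverse ln_realpow ln_teval[OF assms(2)])
  finally show ?thesis unfolding P .
qed


lemma ln_inj_pos: "(x::real) > 0 \<Longrightarrow> y > 0 \<Longrightarrow> ln x = ln y \<Longrightarrow> x = y"
  by simp

lemma yh_mut:
  assumes k: "k < n" and i: "i < n" and Bkk: "B k k = 0" and pv: "positive_pt n d v"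
    and Xp: "\<forall>j<n. X j v > 0"
  shows "yh n d (mutB d k B) (mutY d k B Y) (mutX n d k B Y X) i v =
    (if i = k then inverse (yh n d B Y X k v)
     else yh n d B Y X i v * power_int (yh n d B Y X k v) (int (d k) * pos (B k i))
          * power_int (Sf n d B Y X k v) (- B k i))"
proof -
  define X' where "X' = mutX n d k B Y X"
  define B' where "B' = mutB d k B"
  define Y' where "Y' = mutY d k B Y"
  define lx where "lx j = ln (X j v)" for j
  have X'k: "X' k v > 0" unfolding X'_def by (rule Xk_pos[where X=X, OF k pv Xp])
  have X'o: "X' j v = X j v" if "j \<noteq> k" for j using that by (simp add: X'_def mutX_other)
  have X'p: "\<forall>j<n. X' j v > 0"
  proof (intro allI impI)
    fix j assume "j < n" then show "X' j v > 0" using X'k X'o Xp by (cases "j = k") auto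
  qed
  have lX'k: "ln (X' k v) = - lx k + of_nat (d k) * (\<Sum>j<n. of_int (pos (- B j k)) * lx j)
     + ln (Sf n d B Y X k v) - Lt n d v (tden d k Y)"
    unfolding X'_def lx_def by (rule ln_Xk[where X=X, OF k pv Xp])
  have L': "ln (yh n d B' Y' X' i v) = Lt n d v (Y' i) + (\<Sum>j<n. of_int (B' j i) * ln (X' j v))"
    by (rule ln_yh[where X=X', OF pv X'p])
  have Lyi: "ln (yh n d B Y X i v) = Lt n d v (Y i) + (\<Sum>j<n. of_int (B j i) * lx j)"
    unfolding lx_def by (rule ln_yh[where X=X, OF pv Xp])
  have Lyk: "ln (yh n d B Y X k v) = Lt n d v (Y k) + (\<Sum>j<n. of_int (B j k) * lx j)"
    unfolding lx_def by (rule ln_yh[where X=X, OF pv Xp])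
  have ypos: "yh n d B Y X j v > 0" for j by (rule yh_pos[where X=X, OF pv Xp])
  have ypos': "yh n d B' Y' X' i v > 0" by (rule yh_pos[where X=X', OF pv X'p])
  have Sp: "Sf n d B Y X k v > 0" by (rule Sf_pos[where X=X, OF k pv Xp])
  define R where "R = {..<n} - {k}"
  have splitsum: "(\<Sum>j<n. f j) = f k + (\<Sum>j\<in>R. f j)" for f :: "nat \<Rightarrow> real"
    unfolding R_def using k by (simp add: sum.remove)
  show ?thesis
  proof (cases "i = k")
    case True
    have B'c: "B' j k = - B j k" for j by (simp add: B'_def mutB_def)
    have "(\<Sum>j<n. of_int (B' j k) * ln (X' j v)) = (\<Sum>j<n. - (of_int (B j k) * lx j))"
    proof (rule sum.cong)
      fix j assume "j \<in> {..<n}"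
      show "of_int (B' j k) * ln (X' j v) = - (of_int (B j k) * lx j)"
      proof (cases "j = k")
        case True then show ?thesis by (simp add: B'c Bkk)
      next
        case False then show ?thesis by (simp add: B'c X'o lx_def)
      qed
    qed simp
    then have "ln (yh n d B' Y' X' k v) = - ln (yh n d B Y X k v)"
      using L' True Lyk by (simp add: Y'_def mutY_def Lt_tinv sum_negf)
    moreover have "ln (inverse (yh n d B Y X k v)) = - ln (yh n d B Y X k v)"
      using ypos[of k] by (simp add: ln_inverse)
    ultimately have "ln (yh n d B' Y' X' k v) = ln (inverse (yh n d B Y X k v))" by simp
    moreover have "yh n d B' Y' X' k v > 0" using ypos' True by simp
    moreover have "inverse (yh n d B Y X k v) > 0" using ypos[of k] by simp
    ultimately have "yh n d B' Y' X' k v = inverse (yh n d B Y X k v)"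
      using ln_inj_pos by blast
    then show ?thesis using True unfolding B'_def Y'_def X'_def by simp
  next
    case False
    define p where "p = pos (B k i)"
    define b where "b = B k i"
    have Y'i: "Lt n d v (Y' i) = Lt n d v (Y i) + of_nat (d k) * of_int p * Lt n d v (Y k)
        - of_int b * Lt n d v (tden d k Y)"
      using False by (simp add: Y'_def mutY_def Lt_tmul Lt_tpow p_def b_def)
    have B'ki: "B' k i = - b" using False by (simp add: B'_def mutB_def b_def)
    have B'ji: "B' j i = B j i + int (d k) * (pos (- B j k) * b + B j k * p)" if "j \<noteq> k" for j
      using that False by (simp add: B'_def mutB_def b_def p_def)
    have S1: "(\<Sum>j<n. of_int (B' j i) * ln (X' j v)) = - of_int b * ln (X' k v)
        + (\<Sum>j\<in>R. of_int (B j i + int (d k) * (pos (- B j k) * b + B j k * p)) * lx j)"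
      unfolding splitsum B'ki
      by (simp, rule sum.cong) (auto simp: R_def B'ji X'o lx_def)
    have S2: "(\<Sum>j\<in>R. of_int (B j i + int (d k) * (pos (- B j k) * b + B j k * p)) * lx j)
       = (\<Sum>j\<in>R. of_int (B j i) * lx j) + of_nat (d k) * of_int b * (\<Sum>j\<in>R. of_int (pos (- B j k)) * lx j)
         + of_nat (d k) * of_int p * (\<Sum>j\<in>R. of_int (B j k) * lx j)"
      by (simp add: sum.distrib sum_distrib_left algebra_simps)
    have S3: "(\<Sum>j<n. of_int (B j i) * lx j) = of_int b * lx k + (\<Sum>j\<in>R. of_int (B j i) * lx j)"
      unfolding splitsum b_def ..
    have S4: "(\<Sum>j<n. of_int (B j k) * lx j) = (\<Sum>j\<in>R. of_int (B j k) * lx j)"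
      unfolding splitsum by (simp add: Bkk)
    have S5: "(\<Sum>j<n. of_int (pos (- B j k)) * lx j) = (\<Sum>j\<in>R. of_int (pos (- B j k)) * lx j)"
      unfolding splitsum by (simp add: Bkk pos_def)
    have yk: "yh n d B Y X k v > 0" and yi: "yh n d B Y X i v > 0" using ypos by auto
    have RHSpos: "yh n d B Y X i v * power_int (yh n d B Y X k v) (int (d k) * p) * power_int (Sf n d B Y X k v) (- b) > 0"
      using yk yi Sp by (intro mult_pos_pos) auto
    have lnR: "ln (yh n d B Y X i v * power_int (yh n d B Y X k v) (int (d k) * p) * power_int (Sf n d B Y X k v) (- b))
       = ln (yh n d B Y X i v) + of_nat (d k) * of_int p * ln (yh n d B Y X k v) - of_int b * ln (Sf n d B Y X k v)"
      using yk yi Sp by (simp add: ln_mult_pos ln_pint)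
    have "ln (yh n d B' Y' X' i v) = ln (yh n d B Y X i v * power_int (yh n d B Y X k v) (int (d k) * p) * power_int (Sf n d B Y X k v) (- b))"
      unfolding lnR L' Y'i S1 S2 lX'k Lyi Lyk S3 S4 S5
      by (simp add: algebra_simps)
    then have "yh n d B' Y' X' i v = yh n d B Y X i v * power_int (yh n d B Y X k v) (int (d k) * p) * power_int (Sf n d B Y X k v) (- b)"
      using ypos' RHSpos ln_inj_pos by blast
    then show ?thesis using False unfolding B'_def Y'_def X'_def p_def b_def by simp
  qed
qed



lemma E_skew:
  fixes Di Dj Dk a b c e :: int
  assumes "Di > 0" "Dj > 0" "Dk > 0" "Di*a = -(Dk*b)" "Dk*c = -(Dj*e)"
  shows "Di * (pos (-a) * c + a * pos c) = -(Dj * (pos (-e) * b + e * pos b))"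
proof -
  have sa: "a > 0 \<longleftrightarrow> b < 0" "a < 0 \<longleftrightarrow> b > 0"
  proof -
    have "a > 0 \<longleftrightarrow> Di * a > 0" using assms(1) by (simp add: zero_less_mult_iff)
    moreover have "b < 0 \<longleftrightarrow> Dk * b < 0" using assms(3) by (simp add: mult_less_0_iff)
    ultimately show "a > 0 \<longleftrightarrow> b < 0" using assms(4) by linarith
    have "a < 0 \<longleftrightarrow> Di * a < 0" using assms(1) by (simp add: mult_less_0_iff)
    moreover have "b > 0 \<longleftrightarrow> Dk * b > 0" using assms(3) by (simp add: zero_less_mult_iff)
    ultimately show "a < 0 \<longleftrightarrow> b > 0" using assms(4) by linarith
  qed
  have sc: "c > 0 \<longleftrightarrow> e < 0" "c < 0 \<longleftrightarrow> e > 0"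
  proof -
    have "c > 0 \<longleftrightarrow> Dk * c > 0" using assms(3) by (simp add: zero_less_mult_iff)
    moreover have "e < 0 \<longleftrightarrow> Dj * e < 0" using assms(2) by (simp add: mult_less_0_iff)
    ultimately show "c > 0 \<longleftrightarrow> e < 0" using assms(5) by linarith
    have "c < 0 \<longleftrightarrow> Dk * c < 0" using assms(3) by (simp add: mult_less_0_iff)
    moreover have "e > 0 \<longleftrightarrow> Dj * e > 0" using assms(2) by (simp add: zero_less_mult_iff)
    ultimately show "c < 0 \<longleftrightarrow> e > 0" using assms(5) by linarith
  qed
  have key: "Di * (a * c) = Dj * (e * b)"
  proof -
    have "Di * (a * c) = (Di * a) * c" by (simp add: mult.assoc)
    also have "\<dots> = - (b * (Dk * c))" using assms(4) by simp
    also have "\<dots> = b * (Dj * e)" using assms(5) by simp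
    finally show ?thesis by simp
  qed
  have pm: "pos x = (if x \<ge> 0 then x else 0)" for x by (simp add: pos_def max_def)
  have key2: "Di * a * c = Dj * e * b" using key by (simp add: mult.assoc)
  show ?thesis
  proof (cases "a < 0")
    case True
    then have b: "b > 0" using sa by simp
    show ?thesis
    proof (cases "c < 0")
      case True
      then have "e > 0" using sc by simp
      then have "pos (-a) = -a" "pos c = 0" "pos (-e) = 0" "pos b = b" using \<open>a < 0\<close> True b by (simp_all add: pm)
      then show ?thesis using key2 by (simp add: ring_distribs)
    next
      case False
      then have "e \<le> 0" using sc by linarith
      then have "pos (-a) = -a" "pos c = c" "pos (-e) = -e" "pos b = b" using \<open>a < 0\<close> False b by (simp_all add: pm)
      then show ?thesis by (simp add: ring_distribs)
    qed
  next
    case False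
    then have b: "b \<le> 0" using sa by linarith
    show ?thesis
    proof (cases "c < 0")
      case True
      then have "e > 0" using sc by simp
      then have "pos (-a) = 0" "pos c = 0" "pos (-e) = 0" "pos b = 0" using \<open>\<not> a < 0\<close> True b by (simp_all add: pm)
      then show ?thesis by simp
    next
      case False
      then have "e \<le> 0" using sc by linarith
      then have "pos (-a) = 0" "pos c = c" "pos (-e) = -e" "pos b = 0" using \<open>\<not> a < 0\<close> False b by (simp_all add: pm)
      then show ?thesis using key2 by (simp add: ring_distribs)
    qed
  qed
qed

lemma mutB_skew:
  assumes Dp: "\<forall>i<n. D i > 0" and sk: "\<forall>i<n. \<forall>j<n. D i * B i j = -(D j * B j i)" and k: "k < n"
  shows "\<forall>i<n. \<forall>j<n. D i * mutB d k B i j = -(D j * mutB d k B j i)"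
proof (intro allI impI)
  fix i j assume i: "i < n" and j: "j < n"
  show "D i * mutB d k B i j = -(D j * mutB d k B j i)"
  proof (cases "i = k \<or> j = k")
    case True
    have "D i * B i j = -(D j * B j i)" using sk i j by blast
    then show ?thesis using True by (auto simp: mutB_def)
  next
    case False
    have E: "D i * (pos (- B i k) * B k j + B i k * pos (B k j)) = -(D j * (pos (- B j k) * B k i + B j k * pos (B k i)))"
    proof (rule E_skew)
      show "D i > 0" "D j > 0" "D k > 0" using Dp i j k by auto
      show "D i * B i k = -(D k * B k i)" using sk i k by blast
      show "D k * B k j = -(D j * B j k)" using sk j k by blast
    qed
    have "D i * mutB d k B i j = D i * B i j + int (d k) * (D i * (pos (- B i k) * B k j + B i k * pos (B k j)))"
      using False by (simp add: mutB_def algebra_simps)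
    also have "\<dots> = -(D j * B j i) + int (d k) * (-(D j * (pos (- B j k) * B k i + B j k * pos (B k i))))"
    proof -
      have "D i * B i j = -(D j * B j i)" using sk i j by blast
      then show ?thesis using E by simp
    qed
    also have "\<dots> = -(D j * mutB d k B j i)"
      using False by (simp add: mutB_def algebra_simps)
    finally show ?thesis .
  qed
qed

definition Inv :: "nat \<Rightarrow> (nat \<Rightarrow> nat) \<Rightarrow> (nat \<Rightarrow> nat \<Rightarrow> int) \<Rightarrow> (nat \<Rightarrow> int) \<Rightarrow> seed \<Rightarrow> bool" where
  "Inv n d B0 D S \<longleftrightarrow> (\<forall>i<n. \<forall>j<n. D i * fst S i j = - (D j * fst S j i)) \<and>
     (\<forall>i<n. (\<exists>g. homd n d B0 (snd (snd S) i) g) \<and> (\<forall>v. positive_pt n d v \<longrightarrow> snd (snd S) i v > 0)) \<and>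
     (\<forall>k<n. homd n d B0 (yh n d (fst S) (fst (snd S)) (snd (snd S)) k) (\<lambda>_. 0))"

lemma Sf_homd:
  assumes "homd n d B0 (yh n d B Y X k) (\<lambda>_. 0)"
  shows "homd n d B0 (Sf n d B Y X k) (\<lambda>_. 0)"
proof (rule homd_inv0, intro allI impI)
  fix l v assume "posl n l" "positive_pt n d v"
  then have "yh n d B Y X k (act n B0 l v) = yh n d B Y X k v" by (rule homd_inv0D[OF assms])
  then show "Sf n d B Y X k (act n B0 l v) = Sf n d B Y X k v"
    by (simp add: Sf_def zval_act)
qed

lemma Inv_mut:
  assumes Dp: "\<forall>i<n. D i > 0" and k: "k < n" and I: "Inv n d B0 D (B, Y, X)"
  shows "Inv n d B0 D (mut n d (B, Y, X) k)"
proof -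
  have sk: "\<forall>i<n. \<forall>j<n. D i * B i j = -(D j * B j i)" using I unfolding Inv_def fst_conv snd_conv by blast
  have Xh: "\<forall>i<n. \<exists>g. homd n d B0 (X i) g" using I unfolding Inv_def fst_conv snd_conv by blast
  have Xp: "\<And>v. positive_pt n d v \<Longrightarrow> \<forall>j<n. X j v > 0" using I unfolding Inv_def fst_conv snd_conv by blast
  have yh0: "\<forall>i<n. homd n d B0 (yh n d B Y X i) (\<lambda>_. 0)" using I unfolding Inv_def fst_conv snd_conv by blast
  have Bkk: "B k k = 0"
  proof -
    have "D k * B k k = -(D k * B k k)" using sk k by blast
    then have "D k * B k k = 0" by simp
    moreover have "D k > 0" using Dp k by blast
    ultimately show ?thesis by simp
  qed
  obtain G where G: "\<forall>j<n. homd n d B0 (X j) (G j)" using Xh by metis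
  have m: "mut n d (B, Y, X) k = (mutB d k B, mutY d k B Y, mutX n d k B Y X)" by (simp add: mut_def)
  have A: "\<forall>i<n. \<forall>j<n. D i * mutB d k B i j = -(D j * mutB d k B j i)"
    by (rule mutB_skew[OF Dp sk k])
  have Xk_h: "\<exists>g. homd n d B0 (mutX n d k B Y X k) g"
  proof -
    have "\<exists>g. homd n d B0 (\<lambda>v. inverse (X k v) * (\<Prod>j<n. power_int (X j v) (pos (- B j k))) ^ d k
      * Sf n d B Y X k v / teval n d v (tden d k Y)) g"
      apply (rule exI)
      apply (rule homd_divide)
       apply (rule homd_mult)
        apply (rule homd_mult)
         apply (rule homd_inverse)
      using G k apply blast
        apply (rule homd_power)
        apply (rule homd_prod)
         apply simp
        apply (rule ballI)
        apply (rule homd_pint)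
      using G apply blast
       apply (rule Sf_homd)
      using yh0 k apply blast
      apply (rule homd_teval)
      done
    then obtain g where "homd n d B0 (\<lambda>v. inverse (X k v) * (\<Prod>j<n. power_int (X j v) (pos (- B j k))) ^ d k
      * Sf n d B Y X k v / teval n d v (tden d k Y)) g" by blast
    then have "homd n d B0 (mutX n d k B Y X k) g"
      by (rule homd_fcong) (simp add: mutX_k)
    then show ?thesis by blast
  qed
  have B: "\<forall>i<n. (\<exists>g. homd n d B0 (mutX n d k B Y X i) g) \<and> (\<forall>v. positive_pt n d v \<longrightarrow> mutX n d k B Y X i v > 0)"
  proof (intro allI impI, rule conjI)
    fix i assume i: "i < n"
    show "\<exists>g. homd n d B0 (mutX n d k B Y X i) g"
      using Xk_h Xh i by (cases "i = k") (auto simp: mutX_other)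
    show "\<forall>v. positive_pt n d v \<longrightarrow> mutX n d k B Y X i v > 0"
    proof (intro allI impI)
      fix v assume pv: "positive_pt n d v"
      show "mutX n d k B Y X i v > 0"
      proof (cases "i = k")
        case True then show ?thesis using Xk_pos[where X=X, OF k pv Xp[OF pv]] by simp
      next
        case False then show ?thesis using Xp[OF pv] i by (simp add: mutX_other)
      qed
    qed
  qed
  have C: "\<forall>i<n. homd n d B0 (yh n d (mutB d k B) (mutY d k B Y) (mutX n d k B Y X) i) (\<lambda>_. 0)"
  proof (intro allI impI homd_inv0)
    fix i l v assume i: "i < n" and pl: "posl n l" and pv: "positive_pt n d v"
    have pv': "positive_pt n d (act n B0 l v)" by (rule positive_act[OF pl pv])
    have e1: "yh n d B Y X j (act n B0 l v) = yh n d B Y X j v" if "j < n" for j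
      using homd_inv0D[OF yh0[rule_format, OF that] pl pv] .
    have e2: "Sf n d B Y X k (act n B0 l v) = Sf n d B Y X k v"
      using homd_inv0D[OF Sf_homd[OF yh0[rule_format, OF k]] pl pv] .
    show "yh n d (mutB d k B) (mutY d k B Y) (mutX n d k B Y X) i (act n B0 l v) =
          yh n d (mutB d k B) (mutY d k B Y) (mutX n d k B Y X) i v"
      unfolding yh_mut[where X=X and B=B and d=d and n=n, OF k i Bkk pv' Xp[OF pv']] yh_mut[where X=X and B=B and d=d and n=n, OF k i Bkk pv Xp[OF pv]]
      using e1[OF i] e1[OF k] e2 by simp
  qed
  show ?thesis unfolding m Inv_def fst_conv snd_conv using A B C by blast
qed

lemma Inv_init:
  assumes sk: "\<forall>i<n. \<forall>j<n. D i * B0 i j = -(D j * B0 j i)"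
  shows "Inv n d B0 D (B0, ty, (\<lambda>i v. fst v i))"
proof -
  have X: "\<forall>i<n. (\<exists>g. homd n d B0 (\<lambda>v. fst v i) g) \<and> (\<forall>v. positive_pt n d v \<longrightarrow> fst v i > 0)"
  proof (intro allI impI, rule conjI)
    fix i assume i: "i < n"
    show "\<exists>g. homd n d B0 (\<lambda>v. fst v i) g" using homd_x[OF i] by blast
    show "\<forall>v. positive_pt n d v \<longrightarrow> fst v i > 0" using i by (auto simp: positive_pt_def)
  qed
  have Y: "homd n d B0 (yh n d B0 ty (\<lambda>i v. fst v i) k) (\<lambda>_. 0)" if k: "k < n" for k
  proof -
    have h: "homd n d B0 (yh n d B0 ty (\<lambda>i v. fst v i) k)
       (\<lambda>i. ((\<Sum>j<n. fst (ty k) j * (- B0 i j)) + (\<Sum>q\<in>zset n d. snd (ty k) q * 0))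
           + (\<Sum>j\<in>{..<n}. B0 j k * (if i = j then 1 else 0)))"
      unfolding yh_def
      by (intro homd_mult homd_teval homd_prod ballI homd_pint homd_x) auto
    show ?thesis
    proof (rule homd_cong[OF h], intro allI impI)
      fix i assume i: "i < n"
      have 1: "(\<Sum>j<n. fst (ty k) j * (- B0 i j)) = - B0 i k"
      proof -
        have "(\<Sum>j<n. fst (ty k) j * (- B0 i j)) = (\<Sum>j<n. if j = k then - B0 i j else 0)"
          by (rule sum.cong) (auto simp: ty_def)
        then show ?thesis using k by (simp add: sum.delta)
      qed
      have 2: "(\<Sum>j\<in>{..<n}. B0 j k * (if i = j then 1 else 0)) = B0 i k"
      proof -
        have "(\<Sum>j\<in>{..<n}. B0 j k * (if i = j then 1 else 0)) = (\<Sum>j\<in>{..<n}. if i = j then B0 j k else 0)"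
          by (rule sum.cong) auto
        then show ?thesis using i by (simp add: sum.delta)
      qed
      show "((\<Sum>j<n. fst (ty k) j * (- B0 i j)) + (\<Sum>q\<in>zset n d. snd (ty k) q * 0))
           + (\<Sum>j\<in>{..<n}. B0 j k * (if i = j then 1 else 0)) = 0"
        unfolding 1 2 by simp
    qed
  qed
  show ?thesis unfolding Inv_def fst_conv snd_conv using sk X Y by blast
qed

lemma Inv_seed:
  assumes Dp: "\<forall>i<n. D i > 0" and sk: "\<forall>i<n. \<forall>j<n. D i * B0 i j = -(D j * B0 j i)"
  shows "set ks \<subseteq> {..<n} \<Longrightarrow> Inv n d B0 D (seed_at n d B0 ks)"
proof (induction ks rule: rev_induct)
  case Nil then show ?case using Inv_init[OF sk] by (simp add: seed_at_def)
next
  case (snoc k ks)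
  then have I: "Inv n d B0 D (seed_at n d B0 ks)" and k: "k < n" by auto
  obtain B Y X where e: "seed_at n d B0 ks = (B, Y, X)" by (metis prod_cases3)
  have "seed_at n d B0 (ks @ [k]) = mut n d (seed_at n d B0 ks) k" by (simp add: seed_at_def)
  then show ?case using Inv_mut[OF Dp k] I e by simp
qed



lemma sumV:
  fixes F :: "(nat + nat) + (nat \<times> nat) \<Rightarrow> real"
  assumes "finite Z"
  shows "(\<Sum>x\<in>Inl ` Inl ` {..<n} \<union> Inl ` Inr ` {..<n} \<union> Inr ` Z. F x)
    = (\<Sum>j<n. F (Inl (Inl j))) + (\<Sum>j<n. F (Inl (Inr j))) + (\<Sum>q\<in>Z. F (Inr q))"
proof -
  have d1: "(Inl ` Inl ` {..<n} \<union> Inl ` Inr ` {..<n}) \<inter> Inr ` Z = ({} :: ((nat + nat) + (nat \<times> nat)) set)" by auto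
  have d2: "Inl ` Inl ` {..<n} \<inter> Inl ` Inr ` {..<n} = ({} :: ((nat + nat) + (nat \<times> nat)) set)" by auto
  have "(\<Sum>x\<in>Inl ` Inl ` {..<n} \<union> Inl ` Inr ` {..<n} \<union> Inr ` Z. F x)
      = (\<Sum>x\<in>Inl ` Inl ` {..<n} \<union> Inl ` Inr ` {..<n}. F x) + (\<Sum>x\<in>Inr ` Z. F x)"
    by (rule sum.union_disjoint) (use d1 assms in auto)
  also have "(\<Sum>x\<in>Inl ` Inl ` {..<n} \<union> Inl ` Inr ` {..<n}. F x)
      = (\<Sum>x\<in>Inl ` Inl ` {..<n}. F x) + (\<Sum>x\<in>Inl ` Inr ` {..<n}. F x)"
    by (rule sum.union_disjoint) (use d2 in auto)
  also have "(\<Sum>x\<in>Inl ` Inl ` {..<n}. F x) = (\<Sum>j<n. F (Inl (Inl j)))"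
    by (simp add: sum.reindex)
  also have "(\<Sum>x\<in>Inl ` Inr ` {..<n}. F x) = (\<Sum>j<n. F (Inl (Inr j)))"
    by (simp add: sum.reindex)
  also have "(\<Sum>x\<in>Inr ` Z. F x) = (\<Sum>q\<in>Z. F (Inr q))"
    by (simp add: sum.reindex)
  finally show ?thesis .
qed

lemma prod_exp_pint: "finite J \<Longrightarrow> (\<Prod>j\<in>J. power_int (exp (t j :: real)) (e j)) = exp (\<Sum>j\<in>J. of_int (e j) * t j)"
  by (simp add: exp_power_int exp_sum)

lemma prod_exp_pow: "finite J \<Longrightarrow> (\<Prod>j\<in>J. (exp (t j :: real)) ^ (e j)) = exp (\<Sum>j\<in>J. of_nat (e j) * t j)"
  by (simp add: exp_of_nat_mult exp_sum)

lemma final: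
  fixes n :: nat and d :: "nat \<Rightarrow> nat" and B :: "nat \<Rightarrow> nat \<Rightarrow> int" and P :: "mon \<Rightarrow> int"
  assumes lp: "laurent_poly n d P"
    and hyp: "\<forall>v. positive_pt n d v \<longrightarrow> lp_eval n d P v = F v"
    and hom: "homd n d B F G"
  shows "homogeneous n B P"
  unfolding homogeneous_def
proof (rule exI[of _ G], intro allI impI)
  fix m0 i0 assume Pm0: "P m0 \<noteq> 0" and i0: "i0 < n"
  show "mon_deg n B m0 i0 = G i0"
  proof (rule ccontr)
    assume nd: "mon_deg n B m0 i0 \<noteq> G i0"
    define S where "S = {m. P m \<noteq> 0}"
    have finS: "finite S" using lp by (simp add: laurent_poly_def S_def)
    have adm: "admissible_mon n d m" if "m \<in> S" for m using lp that unfolding laurent_poly_def S_def by blast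
    have m0S: "m0 \<in> S" using Pm0 by (simp add: S_def)
    define V :: "((nat + nat) + (nat \<times> nat)) set" where
      "V = Inl ` Inl ` {..<n} \<union> Inl ` Inr ` {..<n} \<union> Inr ` zset n d"
    have finV: "finite V" unfolding V_def using zset_finite by simp
    define E1 :: "mon \<Rightarrow> (nat + nat) + (nat \<times> nat) \<Rightarrow> int" where
      "E1 m = (\<lambda>x. case x of Inl (Inl j) \<Rightarrow> if j < n then fst m j else 0
                     | Inl (Inr j) \<Rightarrow> if j < n then int (fst (snd m) j) else 0
                     | Inr q \<Rightarrow> if q \<in> zset n d then int (snd (snd m) q) else 0)" for m
    define E2 :: "mon \<Rightarrow> (nat + nat) + (nat \<times> nat) \<Rightarrow> int" where
      "E2 m = (\<lambda>x. case x of Inl (Inl j) \<Rightarrow> if j < n then G j + (\<Sum>i<n. B j i * int (fst (snd m) i)) else 0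
                     | Inl (Inr j) \<Rightarrow> if j < n then int (fst (snd m) j) else 0
                     | Inr q \<Rightarrow> if q \<in> zset n d then int (snd (snd m) q) else 0)" for m
    define A where "A = S \<times> (UNIV :: bool set)"
    define c :: "mon \<times> bool \<Rightarrow> real" where "c a = (if snd a then of_int (P (fst a)) else - of_int (P (fst a)))" for a
    define E where "E a = (if snd a then E1 (fst a) else E2 (fst a))" for a
    have finA: "finite A" unfolding A_def using finS by simp
    have supp: "\<forall>a\<in>A. \<forall>x. x \<notin> V \<longrightarrow> E a x = 0"
    proof (intro ballI allI impI)
      fix a x assume "a \<in> A" "x \<notin> V"
      then show "E a x = 0" unfolding V_def E_def E1_def E2_def
        by (cases x rule: sum.exhaust; auto split: sum.splits)
    qed
    have main: "\<forall>s. (\<Sum>a\<in>A. c a * exp (\<Sum>x\<in>V. of_int (E a x) * s x)) = 0"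
    proof
      fix s :: "(nat + nat) + (nat \<times> nat) \<Rightarrow> real"
      define sx where "sx j = s (Inl (Inl j))" for j
      define sy where "sy j = s (Inl (Inr j))" for j
      define sz where "sz q = s (Inr q)" for q
      define l where "l j = exp (sx j)" for j
      define yv where "yv j = exp (sy j)" for j
      define zv where "zv q = exp (sz q)" for q
      define w :: pt where "w = (l, yv, zv)"
      define v0 :: pt where "v0 = ((\<lambda>_. 1), (\<lambda>j. yv j * lmono n l (\<lambda>i. B i j)), zv)"
      have Mnz: "lmono n l g \<noteq> 0" for g by (simp add: lmono_def)
      have pl: "posl n l" by (simp add: posl_def l_def)
      have pv0: "positive_pt n d v0" by (simp add: positive_pt_def v0_def yv_def zv_def mono_pos)
      have pw: "positive_pt n d w" by (simp add: positive_pt_def w_def l_def yv_def zv_def)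
      have actw: "act n B l v0 = w"
        by (simp add: act_def v0_def w_def mono_uminus Mnz fun_eq_iff)
      have "F (act n B l v0) = lmono n l G * F v0" using hom pl pv0 unfolding homd_def by blast
      moreover have "lp_eval n d P w = F w" using hyp pw by blast
      moreover have "lp_eval n d P v0 = F v0" using hyp pv0 by blast
      ultimately have key: "lp_eval n d P w = lmono n l G * lp_eval n d P v0"
        using actw by simp
      have splitV: "(\<Sum>x\<in>V. f x) = (\<Sum>j<n. f (Inl (Inl j))) + (\<Sum>j<n. f (Inl (Inr j))) + (\<Sum>q\<in>zset n d. f (Inr q))"
        for f :: "(nat + nat) + (nat \<times> nat) \<Rightarrow> real"
        unfolding V_def by (rule sumV[OF zset_finite])
      have ev1: "mon_eval n d m w = exp (\<Sum>x\<in>V. of_int (E1 m x) * s x)" for m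
      proof -
        have a: "(\<Sum>j<n. of_int (E1 m (Inl (Inl j))) * s (Inl (Inl j))) = (\<Sum>j<n. of_int (fst m j) * sx j)"
          by (rule sum.cong) (auto simp: E1_def sx_def)
        have b: "(\<Sum>j<n. of_int (E1 m (Inl (Inr j))) * s (Inl (Inr j))) = (\<Sum>j<n. of_nat (fst (snd m) j) * sy j)"
          by (rule sum.cong) (auto simp: E1_def sy_def)
        have c: "(\<Sum>q\<in>zset n d. of_int (E1 m (Inr q)) * s (Inr q)) = (\<Sum>q\<in>zset n d. of_nat (snd (snd m) q) * sz q)"
          by (rule sum.cong) (auto simp: E1_def sz_def)
        have "mon_eval n d m w = (\<Prod>j<n. power_int (exp (sx j)) (fst m j)) * (\<Prod>j<n. exp (sy j) ^ fst (snd m) j)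
            * (\<Prod>q\<in>zset n d. exp (sz q) ^ snd (snd m) q)"
          by (simp add: mon_eval_def w_def l_def yv_def zv_def)
        also have "\<dots> = exp ((\<Sum>j<n. of_int (fst m j) * sx j) + (\<Sum>j<n. of_nat (fst (snd m) j) * sy j)
            + (\<Sum>q\<in>zset n d. of_nat (snd (snd m) q) * sz q))"
          by (simp add: prod_exp_pint prod_exp_pow zset_finite exp_add)
        finally show ?thesis unfolding splitV a b c .
      qed
      have ev2: "lmono n l G * mon_eval n d m v0 = exp (\<Sum>x\<in>V. of_int (E2 m x) * s x)" for m
      proof -
        have a: "(\<Sum>j<n. of_int (E2 m (Inl (Inl j))) * s (Inl (Inl j)))
            = (\<Sum>j<n. of_int (G j + (\<Sum>i<n. B j i * int (fst (snd m) i))) * sx j)"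
          by (rule sum.cong) (auto simp: E2_def sx_def)
        have b: "(\<Sum>j<n. of_int (E2 m (Inl (Inr j))) * s (Inl (Inr j))) = (\<Sum>j<n. of_nat (fst (snd m) j) * sy j)"
          by (rule sum.cong) (auto simp: E2_def sy_def)
        have c: "(\<Sum>q\<in>zset n d. of_int (E2 m (Inr q)) * s (Inr q)) = (\<Sum>q\<in>zset n d. of_nat (snd (snd m) q) * sz q)"
          by (rule sum.cong) (auto simp: E2_def sz_def)
        have yvm: "yv j * lmono n l (\<lambda>i. B i j) = exp (sy j + (\<Sum>i<n. of_int (B i j) * sx i))" for j
          by (simp add: yv_def lmono_def l_def exp_add)
        have mG: "lmono n l G = exp (\<Sum>i<n. of_int (G i) * sx i)" by (simp add: lmono_def l_def)
        have "mon_eval n d m v0 = (\<Prod>j<n. (exp (sy j + (\<Sum>i<n. of_int (B i j) * sx i))) ^ fst (snd m) j)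
            * (\<Prod>q\<in>zset n d. exp (sz q) ^ snd (snd m) q)"
          by (simp add: mon_eval_def v0_def zv_def yvm)
        also have "\<dots> = exp ((\<Sum>j<n. of_nat (fst (snd m) j) * (sy j + (\<Sum>i<n. of_int (B i j) * sx i)))
            + (\<Sum>q\<in>zset n d. of_nat (snd (snd m) q) * sz q))"
          unfolding exp_add prod_exp_pow[OF finite_lessThan, symmetric] prod_exp_pow[OF zset_finite, symmetric] ..
        finally have me: "lmono n l G * mon_eval n d m v0 = exp ((\<Sum>i<n. of_int (G i) * sx i)
            + (\<Sum>j<n. of_nat (fst (snd m) j) * (sy j + (\<Sum>i<n. of_int (B i j) * sx i)))
            + (\<Sum>q\<in>zset n d. of_nat (snd (snd m) q) * sz q))"
          unfolding mG by (simp add: exp_add)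
        have sw: "(\<Sum>j<n. of_nat (fst (snd m) j) * (\<Sum>i<n. of_int (B i j) * sx i))
            = (\<Sum>j<n. (\<Sum>i<n. of_int (B j i) * of_nat (fst (snd m) i)) * sx j)"
        proof -
          have "(\<Sum>j<n. of_nat (fst (snd m) j) * (\<Sum>i<n. of_int (B i j) * sx i))
              = (\<Sum>j<n. \<Sum>i<n. of_nat (fst (snd m) j) * of_int (B i j) * sx i)"
            by (simp add: sum_distrib_left mult.assoc)
          also have "\<dots> = (\<Sum>i<n. \<Sum>j<n. of_nat (fst (snd m) j) * of_int (B i j) * sx i)"
            by (rule sum.swap)
          also have "\<dots> = (\<Sum>j<n. (\<Sum>i<n. of_int (B j i) * of_nat (fst (snd m) i)) * sx j)"
            by (simp add: sum_distrib_left sum_distrib_right mult_ac)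
          finally show ?thesis .
        qed
        have "(\<Sum>x\<in>V. of_int (E2 m x) * s x) = (\<Sum>i<n. of_int (G i) * sx i)
            + (\<Sum>j<n. of_nat (fst (snd m) j) * (sy j + (\<Sum>i<n. of_int (B i j) * sx i)))
            + (\<Sum>q\<in>zset n d. of_nat (snd (snd m) q) * sz q)"
        proof -
          have x1: "(\<Sum>j<n. of_int (G j + (\<Sum>i<n. B j i * int (fst (snd m) i))) * sx j)
              = (\<Sum>j<n. of_int (G j) * sx j) + (\<Sum>j<n. (\<Sum>i<n. of_int (B j i) * of_nat (fst (snd m) i)) * sx j)"
            by (simp add: distrib_right sum.distrib)
          have x2: "(\<Sum>j<n. of_nat (fst (snd m) j) * (sy j + (\<Sum>i<n. of_int (B i j) * sx i)))
              = (\<Sum>j<n. of_nat (fst (snd m) j) * sy j) + (\<Sum>j<n. of_nat (fst (snd m) j) * (\<Sum>i<n. of_int (B i j) * sx i))"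
            by (simp add: distrib_left sum.distrib)
          show ?thesis unfolding splitV a b c x1 x2 sw by simp
        qed
        then show ?thesis unfolding me by simp
      qed
      have "(\<Sum>a\<in>A. c a * exp (\<Sum>x\<in>V. of_int (E a x) * s x))
          = (\<Sum>m\<in>S. \<Sum>b\<in>UNIV. c (m, b) * exp (\<Sum>x\<in>V. of_int (E (m, b) x) * s x))"
        unfolding A_def by (simp add: sum.cartesian_product)
      also have "\<dots> = (\<Sum>m\<in>S. of_int (P m) * mon_eval n d m w - of_int (P m) * (lmono n l G * mon_eval n d m v0))"
        by (rule sum.cong) (simp_all add: UNIV_bool c_def E_def ev1 ev2)
      also have "\<dots> = lp_eval n d P w - lmono n l G * lp_eval n d P v0"
        by (simp add: lp_eval_def S_def sum_subtractf sum_distrib_left mult.left_commute)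
      also have "\<dots> = 0" using key by simp
      finally show "(\<Sum>a\<in>A. c a * exp (\<Sum>x\<in>V. of_int (E a x) * s x)) = 0" .
    qed
    have "(\<Sum>a\<in>{a\<in>A. E a = E1 m0}. c a) = 0"
      by (rule multivar[OF finV finA supp main])
    moreover have "{a\<in>A. E a = E1 m0} = {(m0, True)}"
    proof
      show "{(m0, True)} \<subseteq> {a\<in>A. E a = E1 m0}" using m0S by (simp add: A_def E_def)
      show "{a\<in>A. E a = E1 m0} \<subseteq> {(m0, True)}"
      proof
        fix a assume a: "a \<in> {a\<in>A. E a = E1 m0}"
        obtain m b where ab: "a = (m, b)" by fastforce
        have mS: "m \<in> S" and Ea: "E (m, b) = E1 m0" using a ab by (auto simp: A_def)
        have eqy: "fst (snd m) j = fst (snd m0) j" if "j < n" for j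
        proof -
          have "E (m, b) (Inl (Inr j)) = E1 m0 (Inl (Inr j))" using Ea by simp
          then show ?thesis using that by (cases b) (simp_all add: E_def E1_def E2_def)
        qed
        have eqz: "snd (snd m) q = snd (snd m0) q" if "q \<in> zset n d" for q
        proof -
          have "E (m, b) (Inr q) = E1 m0 (Inr q)" using Ea by simp
          then show ?thesis using that by (cases b) (simp_all add: E_def E1_def E2_def)
        qed
        show "a \<in> {(m0, True)}"
        proof (cases b)
          case True
          have eqx: "fst m j = fst m0 j" if "j < n" for j
          proof -
            have "E (m, b) (Inl (Inl j)) = E1 m0 (Inl (Inl j))" using Ea by simp
            then show ?thesis using that True by (simp add: E_def E1_def)
          qed
          have am: "admissible_mon n d m" "admissible_mon n d m0" using adm mS m0S by auto
          have "fst m = fst m0"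
          proof
            fix j show "fst m j = fst m0 j"
              using eqx am by (cases "j < n") (auto simp: admissible_mon_def)
          qed
          moreover have "fst (snd m) = fst (snd m0)"
          proof
            fix j show "fst (snd m) j = fst (snd m0) j"
              using eqy am by (cases "j < n") (auto simp: admissible_mon_def)
          qed
          moreover have "snd (snd m) = snd (snd m0)"
          proof
            fix q show "snd (snd m) q = snd (snd m0) q"
            proof (cases "q \<in> zset n d")
              case True then show ?thesis using eqz by blast
            next
              case False
              then have "snd (snd m) q = 0" "snd (snd m0) q = 0" using am unfolding admissible_mon_def by blast+
              then show ?thesis by simp
            qed
          qed
          ultimately have "m = m0" by (simp add: prod_eq_iff)
          then show ?thesis using ab True by simp
        next
          case False
          have "mon_deg n B m0 j = G j" if j: "j < n" for j
          proof -
            have "E (m, b) (Inl (Inl j)) = E1 m0 (Inl (Inl j))" using Ea by simp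
            then have "G j + (\<Sum>i<n. B j i * int (fst (snd m) i)) = fst m0 j"
              using j False by (simp add: E_def E1_def E2_def)
            moreover have "(\<Sum>i<n. B j i * int (fst (snd m) i)) = (\<Sum>i<n. B j i * int (fst (snd m0) i))"
              by (rule sum.cong) (auto simp: eqy)
            ultimately show ?thesis by (simp add: mon_deg_def)
          qed
          then show ?thesis using nd i0 by blast
        qed
      qed
    qed
    ultimately have "c (m0, True) = 0" by simp
    then show False using Pm0 by (simp add: c_def)
  qed
qed


theorem mainTheorem10:
  fixes n :: nat and d :: "nat \<Rightarrow> nat" and B :: "nat \<Rightarrow> nat \<Rightarrow> int"
    and ks :: "nat list" and i :: nat and P :: "mon \<Rightarrow> int"
  assumes "skew_symmetrizable n B"
    and "\<forall>k<n. d k > 0"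
    and "tree_vertex n ks"
    and "i < n"
    and "laurent_poly n d P"
    and "\<forall>v. positive_pt n d v \<longrightarrow> lp_eval n d P v = cluster_var n d B ks i v"
  shows "homogeneous n B P"
proof -
  obtain D where Dp: "\<forall>i<n. D i > 0" and sk: "\<forall>i<n. \<forall>j<n. D i * B i j = -(D j * B j i)"
    using assms(1) unfolding skew_symmetrizable_def by blast
  have ks: "set ks \<subseteq> {..<n}" using assms(3) by (simp add: tree_vertex_def)
  have I: "Inv n d B D (seed_at n d B ks)" by (rule Inv_seed[OF Dp sk ks])
  then obtain G where "homd n d B (snd (snd (seed_at n d B ks)) i) G"
    using assms(4) unfolding Inv_def by blast
  then have "homd n d B (cluster_var n d B ks i) G" by (simp add: cluster_var_def)
  then show ?thesis by (rule final[OF assms(5) assms(6)])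
qed

end
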